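(* Let $d\in\mathbb{N}$, $\mathfrak{d}\in\{1,2,\ldots,d-1\}$, let $U\subseteq\mathbb{R}^d$ be an open set, let $f\colon\mathbb{R}^d\to\mathbb{R}$ be a function whose restriction $f|_U$ is three times continuously differentiable, let $\mathcal{M}=\{\theta\in\mathbb{R}^d\colon f(\theta)=\inf_{\vartheta\in\mathbb{R}^d}f(\vartheta)\}$, assume that $\mathcal{M}\cap U$ is a non-empty $\mathfrak{d}$-dimensional $C^1$-submanifold of $\mathbb{R}^d$, and assume for every $\theta\in\mathcal{M}\cap U$ that $\operatorname{rank}((\operatorname{Hess}f)(\theta))=d-\mathfrak{d}$. Then for every $x_0\in\mathcal{M}\cap U$ there exist $R_0,\delta_0,\lambda\in(0,\infty)$ such that for every $R\in(0,R_0]$, $\delta\in(0,\delta_0]$, $\theta_0\in V_{R/2,\delta}(x_0)$ and every $\theta\colon[0,\infty)\to\mathbb{R}^d$, $t\mapsto\theta_t$, starting at $\theta_0$ and satisfying $\frac{d}{dt}\theta_t=-\nabla f(\theta_t)$ for $t\in(0,\infty)$, it holds for every $t\in[0,\infty)$ that \[\operatorname{d}(\theta_t,\mathcal{M}\cap U)\le\exp(-\lambda t)\operatorname{d}(\theta_0,\mathcal{M}\cap U).\]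
   Context: $\operatorname{d}(x,\mathcal{A})=\inf_{\vartheta\in\mathcal{A}}|x-\vartheta|$. For $R,\delta>0$ and $x_0\in\mathcal{M}\cap U$, $V_{R,\delta}(x_0)=\{x+v\colon x\in\overline{B}_R(x_0)\cap\mathcal{M}\cap U,\ v\in T_x(\mathcal{M}\cap U)^\perp,\ |v|<\delta\}$, where $\overline{B}_R(x_0)$ is the closed ball and $T_x(\cdot)^\perp$ the orthogonal complement of the tangent space. *)

theory Defs
  imports "HOL-Analysis.Analysis"
begin

definition C1_on :: "'a::real_normed_vector set \<Rightarrow> ('a \<Rightarrow> 'b::real_normed_vector) \<Rightarrow> bool" where
  "C1_on W g \<longleftrightarrow> (\<exists>g'. (\<forall>x\<in>W. (g has_derivative blinfun_apply (g' x)) (at x)) \<and> continuous_on W g')"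

definition C3_on :: "'a::euclidean_space set \<Rightarrow> ('a \<Rightarrow> real) \<Rightarrow> bool" where
  "C3_on U f \<longleftrightarrow> (\<exists>G H. (\<forall>x\<in>U. (f has_derivative (\<lambda>h. G x \<bullet> h)) (at x)) \<and>
                        (\<forall>x\<in>U. (G has_derivative blinfun_apply (H x)) (at x)) \<and> C1_on U H)"

definition gradient :: "('a::euclidean_space \<Rightarrow> real) \<Rightarrow> 'a \<Rightarrow> 'a" where
  "gradient f x = (THE g. (f has_derivative (\<lambda>h. g \<bullet> h)) (at x))"

definition hessian :: "('a::euclidean_space \<Rightarrow> real) \<Rightarrow> 'a \<Rightarrow> 'a \<Rightarrow> 'a" where
  "hessian f x = frechet_derivative (gradient f) (at x)"

definition minset :: "('a \<Rightarrow> real) \<Rightarrow> 'a set" where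
  "minset f = {\<theta>. \<forall>y. f \<theta> \<le> f y}"

definition C1_submanifold :: "nat \<Rightarrow> 'a::euclidean_space set \<Rightarrow> bool" where
  "C1_submanifold k S \<longleftrightarrow> (\<forall>p\<in>S. \<exists>W (\<Phi>::'a\<Rightarrow>'a) \<Psi> L. open W \<and> p \<in> W \<and> open (\<Phi> ` W) \<and>
      homeomorphism W (\<Phi> ` W) \<Phi> \<Psi> \<and> C1_on W \<Phi> \<and> C1_on (\<Phi> ` W) \<Psi> \<and>
      subspace L \<and> dim L = k \<and> \<Phi> ` (S \<inter> W) = \<Phi> ` W \<inter> L)"

definition tangent_space :: "'a::euclidean_space set \<Rightarrow> 'a \<Rightarrow> 'a set" where
  "tangent_space S x = {v. \<exists>\<gamma> e. e > 0 \<and> \<gamma> 0 = x \<and> (\<forall>t\<in>{-e<..<e}. \<gamma> t \<in> S) \<and>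
      (\<gamma> has_vector_derivative v) (at 0)}"

definition Vnbhd :: "'a::euclidean_space set \<Rightarrow> real \<Rightarrow> real \<Rightarrow> 'a \<Rightarrow> 'a set" where
  "Vnbhd S R \<delta> x0 = {x + v | x v. x \<in> cball x0 R \<inter> S \<and>
      v \<in> orthogonal_comp (tangent_space S x) \<and> norm v < \<delta>}"

definition gradient_flow :: "('a::euclidean_space \<Rightarrow> real) \<Rightarrow> (real \<Rightarrow> 'a) \<Rightarrow> bool" where
  "gradient_flow f \<theta> \<longleftrightarrow> continuous_on {0..} \<theta> \<and>
     (\<forall>t>0. f differentiable (at (\<theta> t)) \<and>
            (\<theta> has_vector_derivative - gradient f (\<theta> t)) (at t))"

end

theory Submission
  imports Defs
begin

lemma dini_mono:
  fixes g :: "real \<Rightarrow> real"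
  assumes ab: "a \<le> b" and cont: "continuous_on {a..b} g"
    and D: "\<And>t \<epsilon> \<eta>. t \<in> {a<..<b} \<Longrightarrow> \<epsilon> > 0 \<Longrightarrow> \<eta> > 0 \<Longrightarrow> \<exists>h. 0 < h \<and> h < \<eta> \<and> g (t+h) \<le> g t + \<epsilon>*h"
  shows "g b \<le> g a"
proof (rule ccontr)
  assume "\<not> g b \<le> g a"
  hence gab: "g a < g b" by simp
  hence "a < b" using ab by (cases "a = b") auto
  have "a \<in> {a..b}" using ab by auto
  with cont obtain d where d: "d > 0" "\<forall>x'\<in>{a..b}. dist x' a < d \<longrightarrow> dist (g x') (g a) < (g b - g a)/2"
    unfolding continuous_on_iff using gab by (metis half_gt_zero diff_gt_0_iff_gt)
  define a' where "a' = min (a + d/2) ((a+b)/2)"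
  have a': "a < a'" "a' < b" using d \<open>a<b\<close> by (auto simp: a'_def min_def)
  have "dist a' a < d" using d a' by (auto simp: a'_def dist_real_def)
  hence "dist (g a') (g a) < (g b - g a)/2" using d a' by auto
  hence ga': "g a' < g b" using abs_ge_self[of "g a' - g a"] gab by (simp add: dist_real_def)
  define \<epsilon> where "\<epsilon> = (g b - g a') / (2*(b - a'))"
  have \<epsilon>: "\<epsilon> > 0" using ga' a' by (auto simp: \<epsilon>_def)
  define \<psi> where "\<psi> y = g y - \<epsilon> * y" for y
  have e2: "\<epsilon>*(b-a') = (g b - g a')/2" using a' by (simp add: \<epsilon>_def field_simps)
  have "\<psi> b - \<psi> a' = (g b - g a') - \<epsilon>*(b-a')" by (simp add: \<psi>_def algebra_simps)
  hence "\<psi> b - \<psi> a' = (g b - g a')/2" using e2 by argo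
  hence \<psi>b: "\<psi> a' < \<psi> b" using ga' by simp
  define Z where "Z = {y \<in> {a'..b}. \<psi> y \<le> \<psi> a'}"
  have cont': "continuous_on {a'..b} \<psi>" unfolding \<psi>_def
    by (intro continuous_intros continuous_on_subset[OF cont]) (use a' in auto)
  have "closed Z" unfolding Z_def
    by (rule continuous_on_closed_Collect_le[OF cont']) (auto intro: continuous_intros)
  have "a' \<in> Z" using a' by (auto simp: Z_def)
  have bdd: "bdd_above Z" unfolding Z_def by (rule bdd_aboveI[of _ b]) auto
  define y where "y = Sup Z"
  have yZ: "y \<in> Z" unfolding y_def using closed_contains_Sup[of Z] \<open>closed Z\<close> bdd \<open>a' \<in> Z\<close> by blast
  have "a' \<le> y" unfolding y_def using cSup_upper[OF \<open>a' \<in> Z\<close> bdd] .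
  have "y \<le> b" "\<psi> y \<le> \<psi> a'" using yZ by (auto simp: Z_def)
  hence "y < b" using \<psi>b by (cases "y = b") auto
  obtain h where h: "0 < h" "h < b - y" "g (y+h) \<le> g y + \<epsilon>*h"
    using D[of y \<epsilon> "b - y"] \<epsilon> \<open>y<b\<close> \<open>a' \<le> y\<close> a' by auto
  have "\<psi> (y+h) \<le> \<psi> y" using h by (simp add: \<psi>_def algebra_simps)
  hence "y + h \<in> Z" using \<open>\<psi> y \<le> \<psi> a'\<close> h \<open>a' \<le> y\<close> by (auto simp: Z_def)
  hence "y + h \<le> y" unfolding y_def using cSup_upper[OF _ bdd] by blast
  thus False using h by simp
qed

lemma dini_from_deriv:
  fixes g k :: "real \<Rightarrow> real"
  assumes kd: "(k has_real_derivative k') (at t)" and "k' \<le> 0"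
    and le: "\<And>h. h > 0 \<Longrightarrow> g (t+h) \<le> k (t+h)" and eq: "g t = k t"
    and "\<epsilon> > 0" "\<eta> > 0"
  shows "\<exists>h. 0 < h \<and> h < \<eta> \<and> g (t+h) \<le> g t + \<epsilon>*h"
proof -
  have "((\<lambda>h. (k (t + h) - k t) / h) \<longlongrightarrow> k') (at 0)" using kd by (simp add: DERIV_def)
  then obtain d where d: "d > 0" "\<And>x. x \<noteq> 0 \<Longrightarrow> norm (x - 0) < d \<Longrightarrow> norm ((k (t + x) - k t) / x - k') < \<epsilon>"
    using \<open>\<epsilon> > 0\<close> unfolding LIM_eq by metis
  define h where "h = min d \<eta> / 2"
  have h: "0 < h" "h < \<eta>" "h < d" using d \<open>\<eta> > 0\<close> by (auto simp: h_def)
  have "norm ((k (t + h) - k t) / h - k') < \<epsilon>" using d(2)[of h] h by auto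
  hence "(k (t + h) - k t) / h < \<epsilon>" using \<open>k' \<le> 0\<close> by auto
  hence "k (t + h) - k t < \<epsilon> * h" using h by (simp add: divide_less_eq)
  hence "g (t+h) \<le> g t + \<epsilon>*h" using le[of h] eq h by auto
  thus ?thesis using h by blast
qed

lemma lin_approx:
  fixes G :: "'a::euclidean_space \<Rightarrow> 'a" and H :: "'a \<Rightarrow> 'a \<Rightarrow>\<^sub>L 'a"
  assumes "convex T" and der: "\<And>y. y \<in> T \<Longrightarrow> (G has_derivative blinfun_apply (H y)) (at y)"
    and bd: "\<And>y. y \<in> T \<Longrightarrow> norm (H y - H0) \<le> \<epsilon>" and "x \<in> T" "z \<in> T"
  shows "norm (G z - G x - blinfun_apply H0 (z - x)) \<le> \<epsilon> * norm (z - x)"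
proof -
  have "norm ((G z - H0 z) - (G x - H0 x)) \<le> \<epsilon> * norm (z - x)"
  proof (rule differentiable_bound[of T "\<lambda>y. G y - H0 y" "\<lambda>y. blinfun_apply (H y - H0)"])
    fix y assume y: "y \<in> T"
    have "((\<lambda>y. G y - H0 y) has_derivative (\<lambda>h. H y h - H0 h)) (at y)"
      by (intro derivative_intros der y blinfun.bounded_linear_right[THEN bounded_linear_imp_has_derivative])
    thus "((\<lambda>y. G y - H0 y) has_derivative blinfun_apply (H y - H0)) (at y within T)"
      by (simp add: minus_blinfun.rep_eq fun_diff_def has_derivative_at_withinI)
    show "onorm (blinfun_apply (H y - H0)) \<le> \<epsilon>" using bd[OF y] by (simp add: norm_blinfun.rep_eq[symmetric])
  qed (use assms in auto)
  thus ?thesis by (simp add: blinfun.diff_right algebra_simps)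
qed

lemma quad_zero:
  fixes A :: "'a::euclidean_space \<Rightarrow>\<^sub>L 'a"
  assumes sym: "\<And>u v. A u \<bullet> v = A v \<bullet> u" and psd: "\<And>z. A z \<bullet> z \<ge> 0" and w: "A w \<bullet> w = 0"
  shows "A w = 0"
proof -
  define a where "a = A w \<bullet> A w"
  define b where "b = A (A w) \<bullet> A w"
  have b: "b \<ge> 0" using psd by (simp add: b_def)
  have key: "A (w + t *\<^sub>R A w) \<bullet> (w + t *\<^sub>R A w) = 2*t*a + t^2 * b" for t
    using sym[of w "A w"] w
    by (simp add: a_def b_def blinfun.add_right blinfun.scaleR_right inner_add_left inner_add_right power2_eq_square algebra_simps)
  define t where "t = - a / (b+1)"
  have "0 \<le> 2*t*a + t^2 * b" using psd key by metis
  hence "0 \<le> (2*t*a + t^2 * b) * (b+1)^2" using b by simp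
  also have "(2*t*a + t^2 * b) * (b+1)^2 = -(a^2 * (b + 2))"
  proof -
    have tb: "t*(b+1) = -a" using b by (simp add: t_def)
    have "(2*t*a + t^2 * b) * (b+1)^2 = 2*a*(t*(b+1))*(b+1) + (t*(b+1))^2*b"
      by (simp add: power2_eq_square algebra_simps)
    also have "... = -(a^2 * (b + 2))" unfolding tb by (simp add: power2_eq_square algebra_simps)
    finally show ?thesis .
  qed
  finally have "a^2 * (b+2) \<le> 0" by simp
  hence "a^2 \<le> 0" using b by (metis add_nonneg_pos mult_le_0_iff not_le zero_less_numeral power2_less_0 order.strict_iff_not)
  hence "a = 0" by simp
  thus ?thesis by (simp add: a_def)
qed

lemma cont_ball:
  fixes H :: "'a::metric_space \<Rightarrow> 'b::real_normed_vector"
  assumes "open U" "x \<in> U" "continuous_on U H" "\<epsilon> > 0"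
  shows "\<exists>\<rho>>0. ball x \<rho> \<subseteq> U \<and> (\<forall>y\<in>ball x \<rho>. norm (H y - H x) \<le> \<epsilon>)"
proof -
  obtain d where d: "d > 0" "\<forall>y\<in>U. dist y x < d \<longrightarrow> dist (H y) (H x) < \<epsilon>"
    using assms unfolding continuous_on_iff by metis
  obtain e where e: "e > 0" "ball x e \<subseteq> U" using assms openE by metis
  show ?thesis
  proof (intro exI[of _ "min d e"] conjI ballI)
    show "ball x (min d e) \<subseteq> U" using e by auto
    fix y assume y: "y \<in> ball x (min d e)"
    hence "y \<in> U" "dist y x < d" using e by (auto simp: dist_commute)
    thus "norm (H y - H x) \<le> \<epsilon>" using d by (auto simp: dist_norm less_imp_le)
  qed (use d e in auto)
qed

lemma grad_zero:
  fixes f :: "'a::euclidean_space \<Rightarrow> real"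
  assumes "open U" "p \<in> U" "\<forall>y. f p \<le> f y" "(f has_derivative (\<lambda>h. G \<bullet> h)) (at p)"
  shows "G = 0"
proof -
  have "(\<lambda>h. G \<bullet> h) = (\<lambda>v. 0)"
    by (rule differential_zero_maxmin[of p U f]) (use assms in auto)
  hence "G \<bullet> G = 0" by metis
  thus ?thesis by simp
qed

lemma hess_sym:
  fixes f :: "'a::euclidean_space \<Rightarrow> real"
  assumes U: "open U" "x \<in> U"
    and fG: "\<And>y. y \<in> U \<Longrightarrow> (f has_derivative (\<lambda>h. G y \<bullet> h)) (at y)"
    and GH: "\<And>y. y \<in> U \<Longrightarrow> (G has_derivative blinfun_apply (H y)) (at y)"
    and Hc: "continuous_on U H"
  shows "H x u \<bullet> v = H x v \<bullet> u"
proof -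
  have est: "\<exists>\<rho>>0. \<forall>a b. norm a < \<rho> \<longrightarrow> norm b < \<rho> \<longrightarrow>
     \<bar>f (x+a+b) - f (x+a) - f (x+b) + f x - H x b \<bullet> a\<bar> \<le> \<epsilon> * norm a * norm b" if eps: "\<epsilon> > 0" for \<epsilon>
  proof -
    obtain \<rho>0 where r0: "\<rho>0 > 0" "ball x \<rho>0 \<subseteq> U" "\<forall>y\<in>ball x \<rho>0. norm (H y - H x) \<le> \<epsilon>"
      using cont_ball[OF U Hc eps] by metis
    show ?thesis
    proof (intro exI[of _ "\<rho>0/4"] conjI allI impI)
      show "\<rho>0/4 > 0" using r0 by simp
      fix a b :: 'a assume a: "norm a < \<rho>0/4" and b: "norm b < \<rho>0/4"
      define g where "g y = f (y+b) - f y - H x b \<bullet> y" for y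
      have "norm (g (x+a) - g x) \<le> (\<epsilon> * norm b) * norm ((x+a) - x)"
      proof (rule differentiable_bound[of "ball x (\<rho>0/2)" g "\<lambda>y h. (G (y+b) - G y - H x b) \<bullet> h"])
        fix y assume y: "y \<in> ball x (\<rho>0/2)"
        have "dist x (y+b) \<le> dist x y + dist y (y+b)" by (rule dist_triangle)
        also have "dist y (y+b) = norm b" by (simp add: dist_norm)
        finally have dd: "dist x (y+b) \<le> dist x y + norm b" .
        have "dist x y < \<rho>0/2" using y by auto
        hence yb: "y + b \<in> ball x \<rho>0" "y \<in> ball x \<rho>0" using dd b zero_le_dist[of x y] norm_ge_zero[of b]
          unfolding mem_ball by linarith+
        have d1: "((\<lambda>y. y + b) has_derivative (\<lambda>h. h)) (at y)" by (intro derivative_eq_intros) auto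
        have d2: "((\<lambda>y. f (y + b)) has_derivative (\<lambda>h. G (y+b) \<bullet> h)) (at y)"
          using has_derivative_compose[OF d1 fG[of "y+b"]] yb r0 by auto
        have d3: "(f has_derivative (\<lambda>h. G y \<bullet> h)) (at y)" using fG yb r0 by auto
        have d4: "((\<lambda>y. H x b \<bullet> y) has_derivative (\<lambda>h. H x b \<bullet> h)) (at y)"
          by (rule bounded_linear_imp_has_derivative) (rule bounded_linear_inner_right)
        have "(g has_derivative (\<lambda>h. G (y+b) \<bullet> h - G y \<bullet> h - H x b \<bullet> h)) (at y)"
          unfolding g_def by (intro has_derivative_diff d2 d3 d4)
        thus "(g has_derivative (\<lambda>h. (G (y+b) - G y - H x b) \<bullet> h)) (at y within ball x (\<rho>0/2))"
          by (auto intro: has_derivative_at_withinI simp: inner_diff_left)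
        have "norm (G (y+b) - G y - H x ((y+b) - y)) \<le> \<epsilon> * norm ((y+b) - y)"
          by (rule lin_approx[of "ball x \<rho>0"]) (use yb r0 GH in auto)
        hence nb: "norm (G (y+b) - G y - H x b) \<le> \<epsilon> * norm b" by simp
        show "onorm (\<lambda>h. (G (y+b) - G y - H x b) \<bullet> h) \<le> \<epsilon> * norm b"
        proof (rule onorm_le)
          fix h
          have "norm ((G (y+b) - G y - H x b) \<bullet> h) \<le> norm (G (y+b) - G y - H x b) * norm h"
            using Cauchy_Schwarz_ineq2 by (simp add: Cauchy_Schwarz_ineq2)
          also have "... \<le> \<epsilon> * norm b * norm h" using nb by (simp add: mult_right_mono)
          finally show "norm ((G (y+b) - G y - H x b) \<bullet> h) \<le> \<epsilon> * norm b * norm h" .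
        qed
      qed (use a r0 in \<open>auto simp: dist_norm\<close>)
      moreover have "g (x+a) - g x = f (x+a+b) - f (x+a) - f (x+b) + f x - H x b \<bullet> a"
        by (simp add: g_def inner_add_right algebra_simps)
      ultimately show "\<bar>f (x+a+b) - f (x+a) - f (x+b) + f x - H x b \<bullet> a\<bar> \<le> \<epsilon> * norm a * norm b"
        by (simp add: algebra_simps)
    qed
  qed
  define c where "c = norm u * norm v"
  have c: "c \<ge> 0" by (simp add: c_def)
  have "\<bar>H x u \<bullet> v - H x v \<bullet> u\<bar> \<le> 0 + e" if e: "e > 0" for e
  proof -
    define \<epsilon> where "\<epsilon> = e / (2*(c+1))"
    have \<epsilon>: "\<epsilon> > 0" using e c by (simp add: \<epsilon>_def)
    obtain \<rho> where r: "\<rho> > 0" "\<forall>a b. norm a < \<rho> \<longrightarrow> norm b < \<rho> \<longrightarrow>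
     \<bar>f (x+a+b) - f (x+a) - f (x+b) + f x - H x b \<bullet> a\<bar> \<le> \<epsilon> * norm a * norm b"
      using est[OF \<epsilon>] by metis
    define D where "D = norm u + norm v + 1"
    have D: "D > 0" using norm_ge_zero[of u] norm_ge_zero[of v] unfolding D_def by argo
    define \<tau> where "\<tau> = \<rho> / (2*D)"
    have \<tau>: "\<tau> > 0" using r(1) D unfolding \<tau>_def by simp
    have nu: "norm (\<tau> *\<^sub>R u) < \<rho>" "norm (\<tau> *\<^sub>R v) < \<rho>"
    proof -
      have "\<tau> * D = \<rho>/2" unfolding \<tau>_def using D by simp
      moreover have "\<tau> * norm u \<le> \<tau> * D" "\<tau> * norm v \<le> \<tau> * D"
        using \<tau> unfolding D_def by (intro mult_left_mono; simp)+
      ultimately show "norm (\<tau> *\<^sub>R u) < \<rho>" "norm (\<tau> *\<^sub>R v) < \<rho>" using \<tau> D r(1) by auto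
    qed
    have E1: "\<bar>f (x+\<tau> *\<^sub>R u+\<tau> *\<^sub>R v) - f (x+\<tau> *\<^sub>R u) - f (x+\<tau> *\<^sub>R v) + f x - H x (\<tau> *\<^sub>R v) \<bullet> (\<tau> *\<^sub>R u)\<bar>
       \<le> \<epsilon> * norm (\<tau> *\<^sub>R u) * norm (\<tau> *\<^sub>R v)" using r nu by blast
    have E2: "\<bar>f (x+\<tau> *\<^sub>R v+\<tau> *\<^sub>R u) - f (x+\<tau> *\<^sub>R v) - f (x+\<tau> *\<^sub>R u) + f x - H x (\<tau> *\<^sub>R u) \<bullet> (\<tau> *\<^sub>R v)\<bar>
       \<le> \<epsilon> * norm (\<tau> *\<^sub>R v) * norm (\<tau> *\<^sub>R u)" using r nu by blast
    have sw: "x+\<tau> *\<^sub>R v+\<tau> *\<^sub>R u = x+\<tau> *\<^sub>R u+\<tau> *\<^sub>R v" by (simp add: algebra_simps)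
    define P where "P = f (x+\<tau> *\<^sub>R u+\<tau> *\<^sub>R v) - f (x+\<tau> *\<^sub>R u) - f (x+\<tau> *\<^sub>R v) + f x"
    have E2': "\<bar>P - H x (\<tau> *\<^sub>R u) \<bullet> (\<tau> *\<^sub>R v)\<bar> \<le> \<epsilon> * norm (\<tau> *\<^sub>R v) * norm (\<tau> *\<^sub>R u)"
      using E2 unfolding sw P_def by (simp add: algebra_simps)
    have E1': "\<bar>P - H x (\<tau> *\<^sub>R v) \<bullet> (\<tau> *\<^sub>R u)\<bar> \<le> \<epsilon> * norm (\<tau> *\<^sub>R u) * norm (\<tau> *\<^sub>R v)"
      using E1 unfolding P_def .
    have nn: "norm (\<tau> *\<^sub>R u) * norm (\<tau> *\<^sub>R v) = \<tau>^2 * c" using \<tau> by (simp add: c_def power2_eq_square)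
    have "\<bar>H x (\<tau> *\<^sub>R u) \<bullet> (\<tau> *\<^sub>R v) - H x (\<tau> *\<^sub>R v) \<bullet> (\<tau> *\<^sub>R u)\<bar>
        \<le> \<bar>P - H x (\<tau> *\<^sub>R v) \<bullet> (\<tau> *\<^sub>R u)\<bar> + \<bar>P - H x (\<tau> *\<^sub>R u) \<bullet> (\<tau> *\<^sub>R v)\<bar>"
      by linarith
    also have "... \<le> \<epsilon> * (\<tau>^2 * c) + \<epsilon> * (\<tau>^2 * c)"
    proof -
      have nn2: "norm (\<tau> *\<^sub>R v) * norm (\<tau> *\<^sub>R u) = \<tau>^2 * c" using nn by (simp add: mult.commute)
      have a1: "\<epsilon> * norm (\<tau> *\<^sub>R u) * norm (\<tau> *\<^sub>R v) = \<epsilon> * (\<tau>^2 * c)" using nn by (simp add: mult.assoc)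
      have a2: "\<epsilon> * norm (\<tau> *\<^sub>R v) * norm (\<tau> *\<^sub>R u) = \<epsilon> * (\<tau>^2 * c)" using nn2 by (simp add: mult.assoc)
      show ?thesis using E1' E2' a1 a2 by linarith
    qed
    finally have F: "\<bar>H x (\<tau> *\<^sub>R u) \<bullet> (\<tau> *\<^sub>R v) - H x (\<tau> *\<^sub>R v) \<bullet> (\<tau> *\<^sub>R u)\<bar> \<le> \<epsilon> * (\<tau>^2 * c) + \<epsilon> * (\<tau>^2 * c)" .
    have "H x (\<tau> *\<^sub>R u) \<bullet> (\<tau> *\<^sub>R v) - H x (\<tau> *\<^sub>R v) \<bullet> (\<tau> *\<^sub>R u) = \<tau>^2 * (H x u \<bullet> v - H x v \<bullet> u)"
      by (simp add: blinfun.scaleR_right power2_eq_square algebra_simps)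
    hence e1: "\<bar>H x (\<tau> *\<^sub>R u) \<bullet> (\<tau> *\<^sub>R v) - H x (\<tau> *\<^sub>R v) \<bullet> (\<tau> *\<^sub>R u)\<bar> = \<tau>^2 * \<bar>H x u \<bullet> v - H x v \<bullet> u\<bar>"
      by (simp add: abs_mult)
    have e2: "\<epsilon> * (\<tau>^2 * c) + \<epsilon> * (\<tau>^2 * c) = \<tau>^2 * (2 * \<epsilon> * c)" by (simp add: algebra_simps)
    have "\<tau>^2 * \<bar>H x u \<bullet> v - H x v \<bullet> u\<bar> \<le> \<tau>^2 * (2 * \<epsilon> * c)" using F unfolding e1 e2 .
    hence "\<bar>H x u \<bullet> v - H x v \<bullet> u\<bar> \<le> 2 * \<epsilon> * c" using \<tau> by simp
    also have "2 * \<epsilon> * c \<le> e" using e c by (simp add: \<epsilon>_def field_simps)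
    finally show ?thesis by simp
  qed
  hence "\<bar>H x u \<bullet> v - H x v \<bullet> u\<bar> \<le> 0" by (rule field_le_epsilon)
  thus ?thesis by simp
qed

lemma psd_min:
  fixes f :: "'a::euclidean_space \<Rightarrow> real"
  assumes U: "open U" "p \<in> U" and minp: "\<forall>y. f p \<le> f y"
    and fG: "\<And>y. y \<in> U \<Longrightarrow> (f has_derivative (\<lambda>h. G y \<bullet> h)) (at y)"
    and GH: "\<And>y. y \<in> U \<Longrightarrow> (G has_derivative blinfun_apply (H y)) (at y)"
    and Hc: "continuous_on U H"
  shows "H p w \<bullet> w \<ge> 0"
proof (rule ccontr)
  assume "\<not> H p w \<bullet> w \<ge> 0"
  hence q: "H p w \<bullet> w < 0" by simp
  have Gp: "G p = 0" by (rule grad_zero[OF U minp fG[OF U(2)]])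
  have w0: "w \<noteq> 0" using q by auto
  hence nw: "norm w > 0" by simp
  define \<epsilon> where "\<epsilon> = -(H p w \<bullet> w) / (2 * (norm w)^2)"
  have "H p w \<bullet> w / (2 * (norm w)^2) < 0" using q nw by (intro divide_neg_pos) auto
  hence \<epsilon>: "\<epsilon> > 0" by (simp add: \<epsilon>_def)
  have \<epsilon>w: "\<epsilon> * (norm w)^2 = -(H p w \<bullet> w)/2" using nw by (simp add: \<epsilon>_def)
  obtain \<rho>0 where r0: "\<rho>0 > 0" "ball p \<rho>0 \<subseteq> U" "\<forall>y\<in>ball p \<rho>0. norm (H y - H p) \<le> \<epsilon>"
    using cont_ball[OF U Hc \<epsilon>] by metis
  define \<tau>0 where "\<tau>0 = \<rho>0 / (2 * norm w)"
  have \<tau>0: "\<tau>0 > 0" using r0 nw by (simp add: \<tau>0_def)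
  have inb: "p + \<tau> *\<^sub>R w \<in> ball p \<rho>0" if "0 \<le> \<tau>" "\<tau> \<le> \<tau>0" for \<tau>
  proof -
    have "\<tau> * norm w \<le> \<tau>0 * norm w" using that nw by (simp add: mult_right_mono)
    also have "\<tau>0 * norm w = \<rho>0/2" using nw by (simp add: \<tau>0_def)
    finally show ?thesis using that r0 by (simp add: dist_norm)
  qed
  have der: "DERIV (\<lambda>\<tau>. f (p + \<tau> *\<^sub>R w)) \<tau> :> G (p + \<tau> *\<^sub>R w) \<bullet> w" if "0 \<le> \<tau>" "\<tau> \<le> \<tau>0" for \<tau>
  proof -
    have yU: "p + \<tau> *\<^sub>R w \<in> U" using inb[OF that] r0 by auto
    have d1: "((\<lambda>\<tau>. p + \<tau> *\<^sub>R w) has_derivative (\<lambda>h. h *\<^sub>R w)) (at \<tau>)"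
      by (intro derivative_eq_intros) auto
    have "((\<lambda>\<tau>. f (p + \<tau> *\<^sub>R w)) has_derivative (\<lambda>h. G (p + \<tau> *\<^sub>R w) \<bullet> (h *\<^sub>R w))) (at \<tau>)"
      using has_derivative_compose[OF d1 fG[OF yU]] by simp
    thus ?thesis unfolding has_field_derivative_def
      by (rule has_derivative_eq_rhs) (auto simp: fun_eq_iff)
  qed
  obtain z where z: "0 < z" "z < \<tau>0" "f (p + \<tau>0 *\<^sub>R w) - f (p + 0 *\<^sub>R w) = (\<tau>0 - 0) * (G (p + z *\<^sub>R w) \<bullet> w)"
    using MVT2[of 0 \<tau>0 "\<lambda>\<tau>. f (p + \<tau> *\<^sub>R w)" "\<lambda>\<tau>. G (p + \<tau> *\<^sub>R w) \<bullet> w"] der \<tau>0 by blast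
  have "norm (G (p + z *\<^sub>R w) - G p - H p ((p + z *\<^sub>R w) - p)) \<le> \<epsilon> * norm ((p + z *\<^sub>R w) - p)"
    by (rule lin_approx[of "ball p \<rho>0"]) (use r0 GH inb z in auto)
  hence la: "norm (G (p + z *\<^sub>R w) - z *\<^sub>R H p w) \<le> \<epsilon> * z * norm w"
    using Gp z by (simp add: blinfun.scaleR_right)
  have "G (p + z *\<^sub>R w) \<bullet> w = (G (p + z *\<^sub>R w) - z *\<^sub>R H p w) \<bullet> w + z * (H p w \<bullet> w)"
    by (simp add: inner_diff_left)
  also have "(G (p + z *\<^sub>R w) - z *\<^sub>R H p w) \<bullet> w \<le> norm (G (p + z *\<^sub>R w) - z *\<^sub>R H p w) * norm w"
    by (rule order_trans[OF abs_ge_self Cauchy_Schwarz_ineq2])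
  also have "... \<le> \<epsilon> * z * norm w * norm w" using la by (simp add: mult_right_mono)
  also have "\<epsilon> * z * norm w * norm w = z * (\<epsilon> * (norm w)^2)" by (simp add: power2_eq_square)
  also have "z * (\<epsilon> * (norm w)^2) + z * (H p w \<bullet> w) = z * (H p w \<bullet> w) / 2" unfolding \<epsilon>w by (simp add: field_simps)
  finally have lt: "G (p + z *\<^sub>R w) \<bullet> w \<le> z * (H p w \<bullet> w) / 2" by simp
  have "z * (H p w \<bullet> w) < 0" using z q by (simp add: mult_pos_neg)
  hence "G (p + z *\<^sub>R w) \<bullet> w < 0" using lt by linarith
  hence "\<tau>0 * (G (p + z *\<^sub>R w) \<bullet> w) < 0" using \<tau>0 by (simp add: mult_pos_neg)
  hence "f (p + \<tau>0 *\<^sub>R w) < f p" using z by simp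
  thus False using minp by (metis not_le)
qed

lemma ker_dim_le:
  fixes A :: "'a::euclidean_space \<Rightarrow> 'a"
  assumes lin: "linear A"
  shows "dim {x. A x = 0} + dim (range A) \<le> DIM('a)"
proof -
  define K where "K = {x. A x = 0}"
  have sK: "subspace K" unfolding K_def using lin by (rule linear_subspace_kernel)
  define C where "C = {y \<in> UNIV. \<forall>x\<in>K. orthogonal x y}"
  have dC: "dim C + dim K = dim (UNIV::'a set)"
    unfolding C_def by (rule dim_subspace_orthogonal_to_vectors[OF sK subspace_UNIV]) simp
  have "range A \<subseteq> A ` C"
  proof
    fix z assume "z \<in> range A"
    then obtain x where x: "z = A x" by auto
    obtain y c where yc: "y \<in> span K" "\<And>w. w \<in> span K \<Longrightarrow> orthogonal c w" "x = y + c"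
      using orthogonal_subspace_decomp_exists[of K x] by metis
    have "y \<in> K" using yc(1) sK by (metis span_eq_iff)
    hence "A y = 0" by (simp add: K_def)
    hence "A x = A c" using yc(3) lin by (simp add: linear_add)
    moreover have "c \<in> C" using yc(2) span_base by (auto simp: C_def orthogonal_commute)
    ultimately show "z \<in> A ` C" using x by auto
  qed
  hence "dim (range A) \<le> dim (A ` C)" by (rule dim_subset)
  also have "... \<le> dim C" by (rule dim_image_le[OF lin])
  finally show ?thesis using dC by (simp add: K_def)
qed

lemma chart_curve:
  fixes \<Phi> \<Psi> :: "'a::euclidean_space \<Rightarrow> 'a"
  assumes hom: "homeomorphism W (\<Phi> ` W) \<Phi> \<Psi>" and oW: "open (\<Phi> ` W)" and sub: "subspace LL"
    and sl: "\<Phi> ` (S \<inter> W) = \<Phi> ` W \<inter> LL"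
    and dPsi: "\<And>y. y \<in> \<Phi> ` W \<Longrightarrow> (\<Psi> has_derivative blinfun_apply (D\<Psi> y)) (at y)"
    and p: "p \<in> S \<inter> W" and l: "l \<in> LL"
  shows "\<exists>e>0. (\<forall>s. \<bar>s\<bar> < e \<longrightarrow> \<Psi> (\<Phi> p + s *\<^sub>R l) \<in> S \<inter> W) \<and>
     ((\<lambda>s. \<Psi> (\<Phi> p + s *\<^sub>R l)) has_derivative (\<lambda>s. s *\<^sub>R D\<Psi> (\<Phi> p) l)) (at 0) \<and> \<Psi> (\<Phi> p) = p"
proof -
  have pW: "\<Phi> p \<in> \<Phi> ` W" using p by auto
  have pL: "\<Phi> p \<in> LL" using sl p by blast
  obtain e0 where e0: "e0 > 0" "ball (\<Phi> p) e0 \<subseteq> \<Phi> ` W" using oW pW openE by metis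
  define e where "e = e0 / (norm l + 1)"
  have nl: "norm l + 1 > 0" using norm_ge_zero[of l] by argo
  have e: "e > 0" using e0 nl by (simp add: e_def)
  have inS: "\<Psi> (\<Phi> p + s *\<^sub>R l) \<in> S \<inter> W" if s: "\<bar>s\<bar> < e" for s
  proof -
    have "\<bar>s\<bar> * norm l \<le> \<bar>s\<bar> * (norm l + 1)" by (simp add: mult_left_mono)
    also have "... < e * (norm l + 1)" using s nl by (simp add: mult_strict_right_mono)
    also have "... = e0" using nl by (simp add: e_def)
    finally have "norm (s *\<^sub>R l) < e0" by simp
    hence "\<Phi> p + s *\<^sub>R l \<in> ball (\<Phi> p) e0" by (simp add: dist_norm)
    hence "\<Phi> p + s *\<^sub>R l \<in> \<Phi> ` W" using e0 by auto
    moreover have "\<Phi> p + s *\<^sub>R l \<in> LL" using sub pL l by (simp add: subspace_add subspace_scale)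
    ultimately have "\<Phi> p + s *\<^sub>R l \<in> \<Phi> ` (S \<inter> W)" using sl by blast
    then obtain q where q: "q \<in> S \<inter> W" "\<Phi> p + s *\<^sub>R l = \<Phi> q" by auto
    have "\<Psi> (\<Phi> q) = q" using homeomorphism_apply1[OF hom] q by auto
    thus ?thesis using q by simp
  qed
  have d1: "((\<lambda>s. \<Phi> p + s *\<^sub>R l) has_derivative (\<lambda>s. s *\<^sub>R l)) (at 0)"
    by (intro derivative_eq_intros) auto
  have "((\<lambda>s. \<Psi> (\<Phi> p + s *\<^sub>R l)) has_derivative (\<lambda>s. D\<Psi> (\<Phi> p + 0 *\<^sub>R l) (s *\<^sub>R l))) (at 0)"
    by (rule has_derivative_compose[OF d1]) (use dPsi pW in simp)
  hence "((\<lambda>s. \<Psi> (\<Phi> p + s *\<^sub>R l)) has_derivative (\<lambda>s. s *\<^sub>R D\<Psi> (\<Phi> p) l)) (at 0)"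
    by (simp add: blinfun.scaleR_right)
  moreover have "\<Psi> (\<Phi> p) = p" using homeomorphism_apply1[OF hom] p by auto
  ultimately show ?thesis using e inS by blast
qed

lemma chart_inj:
  fixes \<Phi> \<Psi> :: "'a::euclidean_space \<Rightarrow> 'a"
  assumes hom: "homeomorphism W (\<Phi> ` W) \<Phi> \<Psi>" and oW: "open (\<Phi> ` W)"
    and dPhi: "\<And>x. x \<in> W \<Longrightarrow> (\<Phi> has_derivative blinfun_apply (D\<Phi> x)) (at x)"
    and dPsi: "\<And>y. y \<in> \<Phi> ` W \<Longrightarrow> (\<Psi> has_derivative blinfun_apply (D\<Psi> y)) (at y)"
    and y: "y \<in> \<Phi> ` W"
  shows "inj (blinfun_apply (D\<Psi> y))"
proof -
  have yW: "\<Psi> y \<in> W" using hom y by (metis homeomorphism_image2 imageI)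
  have "((\<lambda>z. \<Phi> (\<Psi> z)) has_derivative (\<lambda>v. D\<Phi> (\<Psi> y) (D\<Psi> y v))) (at y)"
    by (rule has_derivative_compose[OF dPsi[OF y] dPhi[OF yW]])
  moreover have "((\<lambda>z. \<Phi> (\<Psi> z)) has_derivative (\<lambda>v. v)) (at y)"
    by (rule has_derivative_transform_within_open[OF has_derivative_ident oW y])
       (use homeomorphism_apply2[OF hom] in auto)
  ultimately have "(\<lambda>v. D\<Phi> (\<Psi> y) (D\<Psi> y v)) = (\<lambda>v. v)" by (rule has_derivative_unique)
  thus ?thesis by (metis injI)
qed

lemma nearest_orth:
  fixes \<gamma> :: "real \<Rightarrow> 'a::euclidean_space"
  assumes d: "(\<gamma> has_derivative (\<lambda>s. s *\<^sub>R n)) (at 0)" and g0: "\<gamma> 0 = p" and e: "e > 0"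
    and inS: "\<forall>s. \<bar>s\<bar> < e \<longrightarrow> \<gamma> s \<in> S" and near: "\<forall>q\<in>S. dist \<theta> p \<le> dist \<theta> q"
  shows "(\<theta> - p) \<bullet> n = 0"
proof -
  define \<phi> where "\<phi> s = (\<theta> - \<gamma> s) \<bullet> (\<theta> - \<gamma> s)" for s
  have dd: "((\<lambda>s. \<theta> - \<gamma> s) has_derivative (\<lambda>h. 0 - h *\<^sub>R n)) (at 0)"
    by (intro has_derivative_diff has_derivative_const d)
  have "(\<phi> has_derivative (\<lambda>h. (\<theta> - \<gamma> 0) \<bullet> (0 - h *\<^sub>R n) + (0 - h *\<^sub>R n) \<bullet> (\<theta> - \<gamma> 0))) (at 0)"
    unfolding \<phi>_def by (rule has_derivative_inner[OF dd dd])
  moreover have "\<forall>y\<in>ball 0 e. \<phi> 0 \<le> \<phi> y"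
  proof
    fix y :: real assume "y \<in> ball 0 e"
    hence "\<gamma> y \<in> S" using inS by (auto simp: dist_norm)
    hence "dist \<theta> p \<le> dist \<theta> (\<gamma> y)" using near by auto
    hence "(dist \<theta> p)^2 \<le> (dist \<theta> (\<gamma> y))^2" by (simp add: power_mono)
    thus "\<phi> 0 \<le> \<phi> y" by (simp add: \<phi>_def g0 dist_norm power2_norm_eq_inner)
  qed
  ultimately have "(\<lambda>h. (\<theta> - \<gamma> 0) \<bullet> (0 - h *\<^sub>R n) + (0 - h *\<^sub>R n) \<bullet> (\<theta> - \<gamma> 0)) = (\<lambda>v. 0)"
    using differential_zero_maxmin[of 0 "ball 0 e" \<phi>] e by auto
  from fun_cong[OF this, of 1] show ?thesis by (simp add: g0 inner_commute)
qed

lemma kernel_from_curve: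
  fixes \<gamma> :: "real \<Rightarrow> 'a::euclidean_space"
  assumes d: "(\<gamma> has_derivative (\<lambda>s. s *\<^sub>R n)) (at 0)" and g0: "\<gamma> 0 = p" and e: "e > 0"
    and z: "\<forall>s. \<bar>s\<bar> < e \<longrightarrow> G (\<gamma> s) = 0"
    and GH: "(G has_derivative blinfun_apply Hp) (at p)"
  shows "Hp n = 0"
proof -
  have "((\<lambda>s. G (\<gamma> s)) has_derivative (\<lambda>s. Hp (s *\<^sub>R n))) (at 0)"
    using has_derivative_compose[OF d] GH g0 by simp
  moreover have "((\<lambda>s. G (\<gamma> s)) has_derivative (\<lambda>s. 0)) (at 0)"
    by (rule has_derivative_transform_within_open[OF has_derivative_const, of "ball 0 e"])
       (use e z in \<open>auto simp: dist_norm\<close>)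
  ultimately have "(\<lambda>s. Hp (s *\<^sub>R n)) = (\<lambda>s. 0)" by (rule has_derivative_unique)
  from fun_cong[OF this, of 1] show ?thesis by simp
qed

lemma linB: "linear (blinfun_apply B)"
  by (rule bounded_linear.linear[OF blinfun.bounded_linear_right])

lemma prop_main:
  fixes f :: "'a::euclidean_space \<Rightarrow> real" and U :: "'a set" and k :: nat
  assumes "1 \<le> k" and "k \<le> DIM('a) - 1"
    and "open U" and "C3_on U f"
    and "minset f \<inter> U \<noteq> {}"
    and "C1_submanifold k (minset f \<inter> U)"
    and "\<forall>\<theta>\<in>minset f \<inter> U. dim (range (hessian f \<theta>)) = DIM('a) - k"
  shows "\<forall>x0\<in>minset f \<inter> U. \<exists>R0>0. \<exists>\<delta>0>0. \<exists>lam>0.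
           \<forall>R\<in>{0<..R0}. \<forall>\<delta>\<in>{0<..\<delta>0}. \<forall>\<theta> :: real \<Rightarrow> 'a.
             \<theta> 0 \<in> Vnbhd (minset f \<inter> U) (R/2) \<delta> x0 \<and> gradient_flow f \<theta> \<longrightarrow>
             (\<forall>t\<ge>0. infdist (\<theta> t) (minset f \<inter> U) \<le> exp (-lam * t) * infdist (\<theta> 0) (minset f \<inter> U))"
proof (intro ballI)
  fix x0 assume x0S: "x0 \<in> minset f \<inter> U"
  define S where "S = minset f \<inter> U"
  have oU: "open U" by fact
  obtain G H where fG: "\<And>x. x\<in>U \<Longrightarrow> (f has_derivative (\<lambda>h. G x \<bullet> h)) (at x)"
    and GH: "\<And>x. x\<in>U \<Longrightarrow> (G has_derivative blinfun_apply (H x)) (at x)" and C1H: "C1_on U H"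
    using assms(4) unfolding C3_on_def by blast
  have Hc: "continuous_on U H"
  proof -
    obtain H' where "\<forall>x\<in>U. (H has_derivative blinfun_apply (H' x)) (at x)" using C1H unfolding C1_on_def by blast
    thus ?thesis by (meson continuous_at_imp_continuous_on has_derivative_continuous)
  qed
  have fc: "continuous_on U f" using fG by (meson continuous_at_imp_continuous_on has_derivative_continuous)
  have gradeq: "gradient f y = G y" if y: "y \<in> U" for y
    unfolding gradient_def
  proof (rule the_equality)
    show "(f has_derivative (\<lambda>h. G y \<bullet> h)) (at y)" using fG y by blast
    fix g assume "(f has_derivative (\<lambda>h. g \<bullet> h)) (at y)"
    hence "(\<lambda>h. g \<bullet> h) = (\<lambda>h. G y \<bullet> h)" using has_derivative_unique fG y by blast
    hence "g \<bullet> (g - G y) = G y \<bullet> (g - G y)" by metis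
    hence "(g - G y) \<bullet> (g - G y) = 0" by (simp add: inner_diff_left)
    thus "g = G y" by simp
  qed
  have hesseq: "hessian f y = blinfun_apply (H y)" if y: "y \<in> U" for y
  proof -
    have "(gradient f has_derivative blinfun_apply (H y)) (at y)"
      by (rule has_derivative_transform_within_open[OF GH[OF y] oU y]) (simp add: gradeq)
    thus ?thesis unfolding hessian_def by (simp add: frechet_derivative_at[symmetric])
  qed
  have minS: "\<forall>y. f p \<le> f y" if "p \<in> S" for p using that by (simp add: S_def minset_def)
  have Gz: "G p = 0" if p: "p \<in> S" for p
    using grad_zero[OF oU _ minS[OF p] fG] p by (auto simp: S_def)
  have sym: "H p u \<bullet> v = H p v \<bullet> u" if "p \<in> U" for p u v
    by (rule hess_sym[OF oU that fG GH Hc])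
  have psd: "H p w \<bullet> w \<ge> 0" if p: "p \<in> S" for p w
    using psd_min[OF oU _ minS[OF p] fG GH Hc] p by (auto simp: S_def)
  have rank: "dim (range (blinfun_apply (H p))) = DIM('a) - k" if p: "p \<in> S" for p
  proof -
    have "dim (range (hessian f p)) = DIM('a) - k" using assms(7) p by (auto simp: S_def)
    moreover have "p \<in> U" using p by (simp add: S_def)
    ultimately show ?thesis using hesseq by simp
  qed
  have ex: "\<exists>W (\<Phi>::'a\<Rightarrow>'a) \<Psi> L. open W \<and> x0 \<in> W \<and> open (\<Phi> ` W) \<and>
      homeomorphism W (\<Phi> ` W) \<Phi> \<Psi> \<and> C1_on W \<Phi> \<and> C1_on (\<Phi> ` W) \<Psi> \<and>
      subspace L \<and> dim L = k \<and> \<Phi> ` (S \<inter> W) = \<Phi> ` W \<inter> L"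
    using bspec[OF assms(6)[unfolded C1_submanifold_def] x0S] unfolding S_def .
  then obtain W and \<Phi> :: "'a \<Rightarrow> 'a" and \<Psi> LL where Wall: "open W \<and> x0 \<in> W \<and> open (\<Phi> ` W) \<and>
      homeomorphism W (\<Phi> ` W) \<Phi> \<Psi> \<and> C1_on W \<Phi> \<and> C1_on (\<Phi> ` W) \<Psi> \<and>
      subspace LL \<and> dim LL = k \<and> \<Phi> ` (S \<inter> W) = \<Phi> ` W \<inter> LL" by (elim exE) fast
  have W: "open W" "x0 \<in> W" "open (\<Phi> ` W)" and hom: "homeomorphism W (\<Phi> ` W) \<Phi> \<Psi>"
    and C1P: "C1_on W \<Phi>" "C1_on (\<Phi> ` W) \<Psi>" and LL: "subspace LL" "dim LL = k"
    and sl: "\<Phi> ` (S \<inter> W) = \<Phi> ` W \<inter> LL" using Wall by auto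
  obtain D\<Phi> where dPhi: "\<And>x. x \<in> W \<Longrightarrow> (\<Phi> has_derivative blinfun_apply (D\<Phi> x)) (at x)"
    using C1P(1) unfolding C1_on_def by blast
  obtain D\<Psi> where dPsi: "\<And>y. y \<in> \<Phi> ` W \<Longrightarrow> (\<Psi> has_derivative blinfun_apply (D\<Psi> y)) (at y)"
    and cPsi: "continuous_on (\<Phi> ` W) D\<Psi>"
    using C1P(2) unfolding C1_on_def by blast
  define N where "N p = blinfun_apply (D\<Psi> (\<Phi> p)) ` LL" for p
  have Nker: "N p = {x. H p x = 0}" if p: "p \<in> S \<inter> W" for p
  proof (rule subspace_dim_equal)
    show "subspace (N p)" unfolding N_def by (rule linear_subspace_image[OF _ LL(1)]) (rule linB)
    show "subspace {x. H p x = 0}" by (rule linear_subspace_kernel) (rule linB)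
    show "N p \<subseteq> {x. H p x = 0}"
    proof
      fix n assume "n \<in> N p"
      then obtain l where l: "l \<in> LL" "n = D\<Psi> (\<Phi> p) l" by (auto simp: N_def)
      obtain e where e: "e > 0" "\<forall>s. \<bar>s\<bar> < e \<longrightarrow> \<Psi> (\<Phi> p + s *\<^sub>R l) \<in> S \<inter> W"
        "((\<lambda>s. \<Psi> (\<Phi> p + s *\<^sub>R l)) has_derivative (\<lambda>s. s *\<^sub>R D\<Psi> (\<Phi> p) l)) (at 0)" "\<Psi> (\<Phi> p) = p"
        using chart_curve[OF hom W(3) LL(1) sl dPsi p l(1)] by metis
      have "H p n = 0" unfolding l(2)
        by (rule kernel_from_curve[OF e(3) _ e(1), of p G]) (use e Gz GH p in \<open>auto simp: S_def\<close>)
      thus "n \<in> {x. H p x = 0}" by simp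
    qed
    have "inj (blinfun_apply (D\<Psi> (\<Phi> p)))" by (rule chart_inj[OF hom W(3) dPhi dPsi]) (use p in auto)
    hence "dim (N p) = dim LL" unfolding N_def
      by (intro dim_image_eq) (auto simp: linB inj_on_def inj_def)
    moreover have "dim {x. H p x = 0} + dim (range (blinfun_apply (H p))) \<le> DIM('a)"
      by (rule ker_dim_le) (rule linB)
    ultimately show "dim {x. H p x = 0} \<le> dim (N p)" using rank[of p] p LL(2) assms(1,2) by auto
  qed
  have orth: "(\<theta> - p) \<bullet> n = 0" if p: "p \<in> S \<inter> W" and near: "\<forall>q\<in>S. dist \<theta> p \<le> dist \<theta> q"
    and n: "n \<in> N p" for p \<theta> n
  proof -
    obtain l where l: "l \<in> LL" "n = D\<Psi> (\<Phi> p) l" using n by (auto simp: N_def)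
    obtain e where e: "e > 0" "\<forall>s. \<bar>s\<bar> < e \<longrightarrow> \<Psi> (\<Phi> p + s *\<^sub>R l) \<in> S \<inter> W"
      "((\<lambda>s. \<Psi> (\<Phi> p + s *\<^sub>R l)) has_derivative (\<lambda>s. s *\<^sub>R D\<Psi> (\<Phi> p) l)) (at 0)" "\<Psi> (\<Phi> p) = p"
      using chart_curve[OF hom W(3) LL(1) sl dPsi p l(1)] by metis
    show ?thesis unfolding l(2)
      by (rule nearest_orth[OF e(3) _ e(1), of p S]) (use e near in auto)
  qed
  have "open (U \<inter> W)" "x0 \<in> U \<inter> W" using W(1,2) x0S oU by auto
  then obtain r0 where r0: "r0 > 0" "ball x0 r0 \<subseteq> U \<inter> W" by (rule openE)
  define r where "r = r0/2"
  have r: "r > 0" "cball x0 r \<subseteq> U \<inter> W" using r0 by (auto simp: r_def)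
  define A where "A = S \<inter> cball x0 r"
  have x0A: "x0 \<in> A" using x0S r by (auto simp: A_def S_def)
  have A_eq: "A = {y \<in> cball x0 r. f y \<le> f x0}"
  proof -
    have "y \<in> S \<longleftrightarrow> f y \<le> f x0" if "y \<in> cball x0 r" for y
      using that r x0S by (auto simp: S_def minset_def intro: order_trans)
    thus ?thesis by (auto simp: A_def)
  qed
  have cA: "compact A"
  proof -
    have "closed A" unfolding A_eq
      by (rule continuous_on_closed_Collect_le) (use continuous_on_subset[OF fc] r in auto)
    moreover have "bounded A" unfolding A_def by (meson bounded_cball bounded_subset inf_le2)
    ultimately show ?thesis by (simp add: compact_eq_bounded_closed)
  qed
  have AU: "A \<subseteq> U" "A \<subseteq> W" "A \<subseteq> S" using r by (auto simp: A_def)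
  \<comment> \<open>uniform positivity on the normal space\<close>
  define C where "C = {z \<in> A \<times> sphere 0 1. \<forall>l\<in>LL. snd z \<bullet> D\<Psi> (\<Phi> (fst z)) l = 0}"
  have cPhi: "continuous_on W \<Phi>" by (rule homeomorphism_cont1[OF hom])
  have cDA: "continuous_on A (\<lambda>p. D\<Psi> (\<Phi> p))"
    by (rule continuous_on_compose2[OF cPsi continuous_on_subset[OF cPhi AU(2)]]) (use AU in auto)
  have cC: "compact C"
  proof -
    have cl: "closed {z \<in> A \<times> sphere 0 1. snd z \<bullet> D\<Psi> (\<Phi> (fst z)) l = 0}" for l
    proof (rule continuous_closed_preimage_constant)
      have "continuous_on (A \<times> sphere 0 1) (\<lambda>z. D\<Psi> (\<Phi> (fst z)))"
        by (rule continuous_on_compose2[OF cDA continuous_on_fst]) auto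
      thus "continuous_on (A \<times> sphere 0 1) (\<lambda>z. snd z \<bullet> D\<Psi> (\<Phi> (fst z)) l)"
        by (intro continuous_intros)
      show "closed (A \<times> sphere (0::'a) 1)" by (rule closed_Times[OF compact_imp_closed[OF cA] closed_sphere])
    qed
    have "C = (A \<times> sphere 0 1) \<inter> (\<Inter>l\<in>LL. {z \<in> A \<times> sphere 0 1. snd z \<bullet> D\<Psi> (\<Phi> (fst z)) l = 0})"
      by (auto simp: C_def)
    moreover have "compact (A \<times> sphere (0::'a) 1)" using cA by (simp add: compact_Times)
    ultimately show ?thesis using cl by (auto intro!: compact_Int_closed closed_INT)
  qed
  have posC: "H p u \<bullet> u > 0" if z: "(p, u) \<in> C" for p u
  proof -
    have p: "p \<in> A" and u: "norm u = 1" and ort: "\<forall>l\<in>LL. u \<bullet> D\<Psi> (\<Phi> p) l = 0" using z by (auto simp: C_def)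
    have pS: "p \<in> S" "p \<in> U" "p \<in> W" using p AU by auto
    have "H p u \<bullet> u \<ge> 0" using psd[OF pS(1)] .
    moreover have "H p u \<bullet> u \<noteq> 0"
    proof
      assume "H p u \<bullet> u = 0"
      hence "H p u = 0" using quad_zero[of "H p" u] sym[OF pS(2)] psd[OF pS(1)] by blast
      hence "u \<in> N p" using Nker[of p] pS by auto
      then obtain l where "l \<in> LL" "u = D\<Psi> (\<Phi> p) l" by (auto simp: N_def)
      hence "u \<bullet> u = 0" using ort by auto
      thus False using u by simp
    qed
    ultimately show ?thesis by simp
  qed
  obtain \<mu> where \<mu>: "\<mu> > 0" "\<And>p u. (p, u) \<in> C \<Longrightarrow> \<mu> \<le> H p u \<bullet> u"
  proof (cases "C = {}")
    case True thus ?thesis using that[of 1] by auto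
  next
    case False
    have "continuous_on C (\<lambda>z. H (fst z) (snd z) \<bullet> snd z)"
    proof -
      have "continuous_on C (\<lambda>z. H (fst z))"
        by (rule continuous_on_compose2[OF Hc continuous_on_fst]) (use AU in \<open>auto simp: C_def\<close>)
      thus ?thesis by (intro continuous_intros)
    qed
    then obtain z0 where z0: "z0 \<in> C" "\<forall>z\<in>C. H (fst z0) (snd z0) \<bullet> snd z0 \<le> H (fst z) (snd z) \<bullet> snd z"
      using continuous_attains_inf[OF cC False] by blast
    show ?thesis
    proof (rule that[of "H (fst z0) (snd z0) \<bullet> snd z0"])
      show "H (fst z0) (snd z0) \<bullet> snd z0 > 0" using posC[of "fst z0" "snd z0"] z0 by simp
      fix p u assume "(p, u) \<in> C" thus "H (fst z0) (snd z0) \<bullet> snd z0 \<le> H p u \<bullet> u" using z0 by force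
    qed
  qed
  have Pos: "H p w \<bullet> w \<ge> \<mu> * (norm w)^2" if p: "p \<in> A" and ort: "\<forall>l\<in>LL. w \<bullet> D\<Psi> (\<Phi> p) l = 0" for p w
  proof (cases "w = 0")
    case True thus ?thesis by simp
  next
    case False
    define u where "u = w /\<^sub>R norm w"
    have "(p, u) \<in> C" using p ort False by (auto simp: C_def u_def)
    hence "\<mu> \<le> H p u \<bullet> u" by (rule \<mu>(2))
    also have "H p u \<bullet> u = (H p w \<bullet> w) / (norm w)^2"
      by (simp add: u_def blinfun.scaleR_right power2_eq_square divide_inverse)
    finally have "\<mu> \<le> (H p w \<bullet> w) / (norm w)^2" .
    moreover have "(norm w)^2 > 0" using False by simp
    ultimately show ?thesis by (simp add: pos_le_divide_eq)
  qed
  obtain Lb where Lb: "Lb > 0" "\<And>y. y \<in> cball x0 r \<Longrightarrow> norm (H y) \<le> Lb"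
  proof -
    have "compact (H ` cball x0 r)"
      by (rule compact_continuous_image[OF continuous_on_subset[OF Hc]]) (use r in auto)
    then obtain B where "B > 0" "\<forall>z\<in>H ` cball x0 r. norm z \<le> B"
      using compact_imp_bounded bounded_pos by metis
    thus ?thesis using that by auto
  qed
  obtain \<rho> where \<rho>: "\<rho> > 0" "\<And>y z. y \<in> cball x0 r \<Longrightarrow> z \<in> cball x0 r \<Longrightarrow> dist y z < \<rho> \<Longrightarrow> dist (H y) (H z) < \<mu>/2"
  proof -
    have "uniformly_continuous_on (cball x0 r) H"
      by (rule compact_uniformly_continuous[OF continuous_on_subset[OF Hc]]) (use r in auto)
    then obtain d where "d > 0" "\<forall>x\<in>cball x0 r. \<forall>x'\<in>cball x0 r. dist x' x < d \<longrightarrow> dist (H x') (H x) < \<mu>/2"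
      using \<mu>(1) unfolding uniformly_continuous_on_def by (meson half_gt_zero)
    thus ?thesis using that by blast
  qed
  define s where "s = min (r/3) (\<rho>/2)"
  have s: "s > 0" "s \<le> r/3" "s \<le> \<rho>/2" using r \<rho> by (auto simp: s_def)
  define lm where "lm = \<mu>/2"
  have lm: "lm > 0" using \<mu> by (simp add: lm_def)
  have reg: "\<exists>p\<in>S. infdist \<theta> S = dist \<theta> p \<and> \<theta> \<in> U \<and> G \<theta> \<bullet> (\<theta> - p) \<ge> lm * (dist \<theta> p)^2 \<and>
               norm (G \<theta>) \<le> Lb * dist \<theta> p" if th: "\<theta> \<in> ball x0 s" for \<theta>
  proof -
    have "closed A" using cA by (rule compact_imp_closed)
    then obtain p where p: "p \<in> A" "infdist \<theta> A = dist \<theta> p" using x0A by (metis empty_iff infdist_attains_inf)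
    have thx: "dist x0 \<theta> < s" using th by simp
    have thr: "\<theta> \<in> cball x0 r" using thx s r by (auto simp: dist_commute)
    have dp: "dist \<theta> p \<le> dist \<theta> x0" using p infdist_le[OF x0A, of \<theta>] by simp
    have near: "\<forall>q\<in>S. dist \<theta> p \<le> dist \<theta> q"
    proof
      fix q assume q: "q \<in> S"
      show "dist \<theta> p \<le> dist \<theta> q"
      proof (cases "q \<in> cball x0 r")
        case True
        hence "q \<in> A" using q by (simp add: A_def)
        thus ?thesis using p infdist_le[of q A \<theta>] by simp
      next
        case False
        hence "dist x0 q > r" by simp
        moreover have "dist x0 q \<le> dist x0 \<theta> + dist \<theta> q" by (rule dist_triangle)
        ultimately have "dist \<theta> q > r - s" using thx by linarith
        moreover have "dist \<theta> p < s" using dp thx by (simp add: dist_commute)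
        ultimately show ?thesis using s by linarith
      qed
    qed
    have pS: "p \<in> S" "p \<in> S \<inter> W" "p \<in> cball x0 r" using p AU by (auto simp: A_def)
    have inf_eq: "infdist \<theta> S = dist \<theta> p"
    proof (rule antisym)
      show "infdist \<theta> S \<le> dist \<theta> p" by (rule infdist_le[OF pS(1)])
      show "dist \<theta> p \<le> infdist \<theta> S"
        unfolding infdist_def using near pS(1) by (auto intro!: cINF_greatest)
    qed
    have thU: "\<theta> \<in> U" using thr r by auto
    have d\<rho>: "dist \<theta> p < \<rho>" using dp thx s by (simp add: dist_commute)
    define w where "w = \<theta> - p"
    have nw: "norm w = dist \<theta> p" by (simp add: w_def dist_norm)
    have ort: "\<forall>l\<in>LL. w \<bullet> D\<Psi> (\<Phi> p) l = 0" using orth[OF pS(2) near] by (auto simp: N_def w_def)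
    have P: "H p w \<bullet> w \<ge> \<mu> * (norm w)^2" using Pos[OF p(1) ort] .
    have Gp: "G p = 0" using Gz pS by auto
    have la: "norm (G \<theta> - G p - H p (\<theta> - p)) \<le> (\<mu>/2) * norm (\<theta> - p)"
    proof (rule lin_approx[of "cball x0 r \<inter> ball p \<rho>"])
      show "convex (cball x0 r \<inter> ball p \<rho>)" by (intro convex_Int convex_cball convex_ball)
      fix y assume y: "y \<in> cball x0 r \<inter> ball p \<rho>"
      show "(G has_derivative blinfun_apply (H y)) (at y)" using y r GH by auto
      have "dist (H y) (H p) < \<mu>/2" using \<rho>(2)[of y p] y pS by (auto simp: dist_commute)
      thus "norm (H y - H p) \<le> \<mu>/2" by (simp add: dist_norm)
    qed (use thr d\<rho> pS \<rho> in \<open>auto simp: dist_commute\<close>)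
    hence la': "norm (G \<theta> - H p w) \<le> (\<mu>/2) * norm w" using Gp by (simp add: w_def)
    have "G \<theta> \<bullet> w = H p w \<bullet> w + (G \<theta> - H p w) \<bullet> w" by (simp add: inner_diff_left)
    moreover have "(G \<theta> - H p w) \<bullet> w \<ge> - ((\<mu>/2) * (norm w)^2)"
    proof -
      have "\<bar>(G \<theta> - H p w) \<bullet> w\<bar> \<le> norm (G \<theta> - H p w) * norm w" by (rule Cauchy_Schwarz_ineq2)
      also have "... \<le> (\<mu>/2) * norm w * norm w" by (rule mult_right_mono[OF la' norm_ge_zero])
      finally show ?thesis by (simp add: power2_eq_square)
    qed
    ultimately have "G \<theta> \<bullet> w \<ge> \<mu> * (norm w)^2 - (\<mu>/2) * (norm w)^2" using P by linarith
    hence Gw: "G \<theta> \<bullet> (\<theta> - p) \<ge> lm * (dist \<theta> p)^2" by (simp add: lm_def w_def[symmetric] nw[symmetric])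
    have "norm (G \<theta> - G p - blinfun_apply 0 (\<theta> - p)) \<le> Lb * norm (\<theta> - p)"
    proof (rule lin_approx[of "cball x0 r"])
      fix y assume y: "y \<in> cball x0 r"
      show "(G has_derivative blinfun_apply (H y)) (at y)" using y r GH by auto
      show "norm (H y - 0) \<le> Lb" using Lb y by simp
    qed (use thr pS in auto)
    hence "norm (G \<theta>) \<le> Lb * dist \<theta> p" using Gp by (simp add: dist_norm)
    thus ?thesis using pS(1) inf_eq thU Gw by blast
  qed
  show "\<exists>R0>0. \<exists>\<delta>0>0. \<exists>lam>0. \<forall>R\<in>{0<..R0}. \<forall>\<delta>\<in>{0<..\<delta>0}. \<forall>\<theta> :: real \<Rightarrow> 'a.
             \<theta> 0 \<in> Vnbhd (minset f \<inter> U) (R/2) \<delta> x0 \<and> gradient_flow f \<theta> \<longrightarrow>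
             (\<forall>t\<ge>0. infdist (\<theta> t) (minset f \<inter> U) \<le> exp (-lam * t) * infdist (\<theta> 0) (minset f \<inter> U))"
    unfolding S_def[symmetric]
  proof -
    define K where "K = 1 + Lb / lm"
    have Llm: "K > 0" using Lb lm by (simp add: K_def add_pos_pos)
    define \<delta>0 where "\<delta>0 = s / (4 * K)"
    have \<delta>0: "\<delta>0 > 0" "\<delta>0 + Lb * \<delta>0 / lm = s/4"
    proof -
      show "\<delta>0 > 0" using s Llm by (simp add: \<delta>0_def)
      have "\<delta>0 * K = s/4" using Llm by (simp add: \<delta>0_def)
      moreover have "\<delta>0 * K = \<delta>0 + Lb * \<delta>0 / lm" by (simp add: K_def algebra_simps)
      ultimately show "\<delta>0 + Lb * \<delta>0 / lm = s/4" by simp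
    qed
    have main: "infdist (\<theta> t) S \<le> exp (-lm * t) * infdist (\<theta> 0) S"
      if R: "R \<in> {0<..s/2}" and \<delta>: "\<delta> \<in> {0<..\<delta>0}" and V: "\<theta> 0 \<in> Vnbhd S (R/2) \<delta> x0"
        and gf: "gradient_flow f \<theta>" and t: "t \<ge> 0" for R \<delta> t and \<theta> :: "real \<Rightarrow> 'a"
    proof -
      obtain x v where xv: "\<theta> 0 = x + v" "x \<in> cball x0 (R/2)" "x \<in> S" "norm v < \<delta>"
        using V by (auto simp: Vnbhd_def)
      define d0 where "d0 = infdist (\<theta> 0) S"
      have d0: "0 \<le> d0" "d0 < \<delta>"
      proof -
        show "0 \<le> d0" by (simp add: d0_def infdist_nonneg)
        have "d0 \<le> dist (\<theta> 0) x" unfolding d0_def by (rule infdist_le[OF xv(3)])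
        also have "dist (\<theta> 0) x = norm v" using xv(1) by (simp add: dist_norm)
        finally show "d0 < \<delta>" using xv(4) by simp
      qed
      have th0: "dist x0 (\<theta> 0) < s/4 + \<delta>0"
      proof -
        have "dist x0 (\<theta> 0) \<le> dist x0 x + dist x (\<theta> 0)" by (rule dist_triangle)
        also have "dist x (\<theta> 0) = norm v" using xv(1) by (simp add: dist_norm)
        finally show ?thesis using xv(2,4) R \<delta> by simp
      qed
      have cont\<theta>: "continuous_on {0..} \<theta>" and der\<theta>: "\<And>t. t > 0 \<Longrightarrow> (\<theta> has_vector_derivative - gradient f (\<theta> t)) (at t)"
        using gf unfolding gradient_flow_def by auto
      define D where "D t = infdist (\<theta> t) S" for t
      have dreg: "\<exists>p\<in>S. D \<tau> = dist (\<theta> \<tau>) p \<and> G (\<theta> \<tau>) \<bullet> (\<theta> \<tau> - p) \<ge> lm * (dist (\<theta> \<tau>) p)^2 \<and>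
               norm (G (\<theta> \<tau>)) \<le> Lb * dist (\<theta> \<tau>) p \<and> (\<theta> has_vector_derivative - G (\<theta> \<tau>)) (at \<tau>)"
        if tp: "\<tau> > 0" "\<theta> \<tau> \<in> ball x0 s" for \<tau>
      proof -
        obtain p where p: "p \<in> S" "infdist (\<theta> \<tau>) S = dist (\<theta> \<tau>) p" "\<theta> \<tau> \<in> U"
          "G (\<theta> \<tau>) \<bullet> (\<theta> \<tau> - p) \<ge> lm * (dist (\<theta> \<tau>) p)^2" "norm (G (\<theta> \<tau>)) \<le> Lb * dist (\<theta> \<tau>) p"
          using reg[OF tp(2)] by blast
        have "(\<theta> has_vector_derivative - G (\<theta> \<tau>)) (at \<tau>)" using der\<theta>[OF tp(1)] gradeq[OF p(3)] by simp
        thus ?thesis using p by (auto simp: D_def)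
      qed
      have CoreA: "exp (2*lm*T) * (D T)^2 \<le> d0^2" if T: "T \<ge> 0" "\<forall>\<tau>\<in>{0<..<T}. \<theta> \<tau> \<in> ball x0 s" for T
      proof -
        define g where "g t = exp (2*lm*t) * (D t)^2" for t
        have "g T \<le> g 0"
        proof (rule dini_mono[of 0 T g])
          show "0 \<le> T" by fact
          show "continuous_on {0..T} g" unfolding g_def D_def
            by (intro continuous_intros continuous_on_infdist continuous_on_subset[OF cont\<theta>]) auto
          fix \<tau> \<epsilon> \<eta> :: real assume \<tau>: "\<tau> \<in> {0<..<T}" "\<epsilon> > 0" "\<eta> > 0"
          obtain p where p: "p \<in> S" "D \<tau> = dist (\<theta> \<tau>) p" "G (\<theta> \<tau>) \<bullet> (\<theta> \<tau> - p) \<ge> lm * (dist (\<theta> \<tau>) p)^2"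
            and vd: "(\<theta> has_vector_derivative - G (\<theta> \<tau>)) (at \<tau>)" using dreg[of \<tau>] \<tau> T by auto
          define k where "k u = exp (2*lm*u) * ((\<theta> u - p) \<bullet> (\<theta> u - p))" for u
          have d1: "((\<lambda>u. \<theta> u - p) has_derivative (\<lambda>h. h *\<^sub>R (- G (\<theta> \<tau>)) - 0)) (at \<tau>)"
            using vd unfolding has_vector_derivative_def by (intro has_derivative_diff has_derivative_const)
          have "((\<lambda>u. (\<theta> u - p) \<bullet> (\<theta> u - p)) has_derivative
              (\<lambda>h. (\<theta> \<tau> - p) \<bullet> (h *\<^sub>R (- G (\<theta> \<tau>)) - 0) + (h *\<^sub>R (- G (\<theta> \<tau>)) - 0) \<bullet> (\<theta> \<tau> - p))) (at \<tau>)"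
            by (rule has_derivative_inner[OF d1 d1])
          hence d2: "((\<lambda>u. (\<theta> u - p) \<bullet> (\<theta> u - p)) has_real_derivative (2 * ((\<theta> \<tau> - p) \<bullet> (- G (\<theta> \<tau>))))) (at \<tau>)"
            unfolding has_field_derivative_def
            by (rule has_derivative_eq_rhs) (auto simp: fun_eq_iff inner_commute algebra_simps)
          have d3: "((\<lambda>u. exp (2*lm*u)) has_real_derivative exp (2*lm*\<tau>) * (2*lm)) (at \<tau>)"
            by (auto intro!: derivative_eq_intros)
          have kd: "(k has_real_derivative exp (2*lm*\<tau>) * (2*lm) * ((\<theta> \<tau> - p) \<bullet> (\<theta> \<tau> - p))
                 + 2 * ((\<theta> \<tau> - p) \<bullet> (- G (\<theta> \<tau>))) * exp (2*lm*\<tau>)) (at \<tau>)"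
            unfolding k_def by (rule DERIV_mult[OF d3 d2])
          have X: "(\<theta> \<tau> - p) \<bullet> (\<theta> \<tau> - p) = (dist (\<theta> \<tau>) p)^2" by (simp add: dist_norm power2_norm_eq_inner)
          have Y: "(\<theta> \<tau> - p) \<bullet> (- G (\<theta> \<tau>)) = - (G (\<theta> \<tau>) \<bullet> (\<theta> \<tau> - p))" by (simp add: inner_commute)
          have "exp (2*lm*\<tau>) * (2*lm) * ((\<theta> \<tau> - p) \<bullet> (\<theta> \<tau> - p)) + 2 * ((\<theta> \<tau> - p) \<bullet> (- G (\<theta> \<tau>))) * exp (2*lm*\<tau>)
              = (2 * exp (2*lm*\<tau>)) * (lm * (dist (\<theta> \<tau>) p)^2 - G (\<theta> \<tau>) \<bullet> (\<theta> \<tau> - p))"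
            unfolding X Y by (simp add: algebra_simps)
          also have "... \<le> 0" using p(3) by (intro mult_nonneg_nonpos) auto
          finally have k'le: "exp (2*lm*\<tau>) * (2*lm) * ((\<theta> \<tau> - p) \<bullet> (\<theta> \<tau> - p)) + 2 * ((\<theta> \<tau> - p) \<bullet> (- G (\<theta> \<tau>))) * exp (2*lm*\<tau>) \<le> 0" .
          show "\<exists>h. 0 < h \<and> h < \<eta> \<and> g (\<tau>+h) \<le> g \<tau> + \<epsilon>*h"
          proof (rule dini_from_deriv[OF kd k'le _ _ \<tau>(2,3)])
            fix h :: real assume "h > 0"
            have "D (\<tau>+h) \<le> dist (\<theta> (\<tau>+h)) p" unfolding D_def by (rule infdist_le[OF p(1)])
            hence "(D (\<tau>+h))^2 \<le> (dist (\<theta> (\<tau>+h)) p)^2" by (intro power_mono) (auto simp: D_def infdist_nonneg)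
            also have "(dist (\<theta> (\<tau>+h)) p)^2 = (\<theta> (\<tau>+h) - p) \<bullet> (\<theta> (\<tau>+h) - p)" by (simp add: dist_norm power2_norm_eq_inner)
            finally show "g (\<tau>+h) \<le> k (\<tau>+h)" unfolding g_def k_def by (simp add: mult_left_mono)
          next
            show "g \<tau> = k \<tau>" unfolding g_def k_def using p(2) X by simp
          qed
        qed
        moreover have "g 0 = d0^2" by (simp add: g_def D_def d0_def)
        ultimately show ?thesis by (simp add: g_def)
      qed
      have Dbound: "D T \<le> exp (-lm*T) * d0" if T: "T \<ge> 0" "\<forall>\<tau>\<in>{0<..<T}. \<theta> \<tau> \<in> ball x0 s" for T
      proof -
        have "(exp (lm*T) * D T)^2 = exp (2*lm*T) * (D T)^2"
          by (simp add: power_mult_distrib power2_eq_square exp_add[symmetric])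
        hence "(exp (lm*T) * D T)^2 \<le> d0^2" using CoreA[OF T] by simp
        hence h: "exp (lm*T) * D T \<le> d0" using d0(1) by (rule power2_le_imp_le)
        have "D T = exp (-lm*T) * (exp (lm*T) * D T)" by (simp add: exp_add[symmetric] mult.assoc[symmetric])
        also have "... \<le> exp (-lm*T) * d0" using h by (simp add: mult_left_mono)
        finally show ?thesis .
      qed
      define c where "c = Lb * d0 / lm"
      have c: "c \<ge> 0" "c * lm = Lb * d0" using Lb d0 lm by (auto simp: c_def)
      have CoreB: "norm (\<theta> T - \<theta> 0) \<le> c" if T: "T \<ge> 0" "\<forall>\<tau>\<in>{0<..<T}. \<theta> \<tau> \<in> ball x0 s" for T
      proof -
        define e where "e = (\<theta> T - \<theta> 0) /\<^sub>R norm (\<theta> T - \<theta> 0)"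
        have ne: "norm e \<le> 1" by (cases "norm (\<theta> T - \<theta> 0) = 0") (simp_all add: e_def)
        have eT: "e \<bullet> (\<theta> T - \<theta> 0) = norm (\<theta> T - \<theta> 0)"
        proof (cases "\<theta> T = \<theta> 0")
          case True thus ?thesis by (simp add: e_def)
        next
          case False
          have "e \<bullet> (\<theta> T - \<theta> 0) = inverse (norm (\<theta> T - \<theta> 0)) * (norm (\<theta> T - \<theta> 0))^2"
            by (simp add: e_def power2_norm_eq_inner)
          thus ?thesis using False by (simp add: power2_eq_square)
        qed
        define g where "g u = e \<bullet> (\<theta> u - \<theta> 0) + c * exp (-lm*u)" for u
        have "g T \<le> g 0"
        proof (rule dini_mono[of 0 T g])
          show "0 \<le> T" by fact
          show "continuous_on {0..T} g" unfolding g_def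
            by (intro continuous_intros continuous_on_subset[OF cont\<theta>]) auto
          fix \<tau> \<epsilon> \<eta> :: real assume \<tau>: "\<tau> \<in> {0<..<T}" "\<epsilon> > 0" "\<eta> > 0"
          obtain p where p: "p \<in> S" "D \<tau> = dist (\<theta> \<tau>) p" "norm (G (\<theta> \<tau>)) \<le> Lb * dist (\<theta> \<tau>) p"
            and vd: "(\<theta> has_vector_derivative - G (\<theta> \<tau>)) (at \<tau>)" using dreg[of \<tau>] \<tau> T by auto
          have "((\<lambda>u. e \<bullet> (\<theta> u - \<theta> 0)) has_derivative (\<lambda>h. e \<bullet> (h *\<^sub>R (- G (\<theta> \<tau>)) - 0))) (at \<tau>)"
            using vd unfolding has_vector_derivative_def
            by (intro has_derivative_inner_right has_derivative_diff has_derivative_const)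
          hence d1: "((\<lambda>u. e \<bullet> (\<theta> u - \<theta> 0)) has_real_derivative e \<bullet> (- G (\<theta> \<tau>))) (at \<tau>)"
            unfolding has_field_derivative_def
            by (rule has_derivative_eq_rhs) (auto simp: fun_eq_iff)
          have d2: "((\<lambda>u. c * exp (-lm*u)) has_real_derivative c * (exp (-lm*\<tau>) * (-lm))) (at \<tau>)"
            by (auto intro!: derivative_eq_intros)
          have gd: "(g has_real_derivative e \<bullet> (- G (\<theta> \<tau>)) + c * (exp (-lm*\<tau>) * (-lm))) (at \<tau>)"
            unfolding g_def by (rule DERIV_add[OF d1 d2])
          have Db: "D \<tau> \<le> exp (-lm*\<tau>) * d0" using Dbound[of \<tau>] \<tau> T by auto
          have "e \<bullet> (- G (\<theta> \<tau>)) \<le> norm e * norm (G (\<theta> \<tau>))"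
            using Cauchy_Schwarz_ineq2[of e "- G (\<theta> \<tau>)"] by simp
          also have "... \<le> norm (G (\<theta> \<tau>))" using ne by (simp add: mult_left_le_one_le)
          also have "... \<le> Lb * D \<tau>" using p by simp
          also have "... \<le> Lb * (exp (-lm*\<tau>) * d0)" using Db Lb by (simp add: mult_left_mono)
          also have "... = c * lm * exp (-lm*\<tau>)" using c by simp
          finally have "e \<bullet> (- G (\<theta> \<tau>)) + c * (exp (-lm*\<tau>) * (-lm)) \<le> 0" by (simp add: algebra_simps)
          thus "\<exists>h. 0 < h \<and> h < \<eta> \<and> g (\<tau>+h) \<le> g \<tau> + \<epsilon>*h"
            by (intro dini_from_deriv[OF gd _ _ _ \<tau>(2,3)]) auto
        qed
        moreover have "g 0 = c" by (simp add: g_def)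
        moreover have "c * exp (-lm*T) \<ge> 0" using c by simp
        ultimately show ?thesis using eT by (simp add: g_def)
      qed
      have stay: "\<forall>t\<ge>0. \<theta> t \<in> ball x0 s"
      proof (rule ccontr)
        assume "\<not> (\<forall>t\<ge>0. \<theta> t \<in> ball x0 s)"
        then obtain t1 where t1: "t1 \<ge> 0" "\<theta> t1 \<notin> ball x0 s" by auto
        define Z where "Z = {t \<in> {0..t1}. (\<lambda>_. s) t \<le> dist x0 (\<theta> t)}"
        have "closed Z" unfolding Z_def
          by (rule continuous_on_closed_Collect_le) (auto intro!: continuous_intros continuous_on_subset[OF cont\<theta>])
        have t1Z: "t1 \<in> Z" using t1 by (auto simp: Z_def)
        have bdd: "bdd_below Z" by (rule bdd_belowI[of _ 0]) (auto simp: Z_def)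
        define T where "T = Inf Z"
        have TZ: "T \<in> Z" unfolding T_def using closed_contains_Inf[of Z] \<open>closed Z\<close> bdd t1Z by blast
        have T0: "T \<ge> 0" using TZ by (auto simp: Z_def)
        have hyp: "\<forall>\<tau>\<in>{0<..<T}. \<theta> \<tau> \<in> ball x0 s"
        proof
          fix \<tau> assume \<tau>: "\<tau> \<in> {0<..<T}"
          show "\<theta> \<tau> \<in> ball x0 s"
          proof (rule ccontr)
            assume "\<theta> \<tau> \<notin> ball x0 s"
            moreover have "T \<le> t1" using TZ by (auto simp: Z_def)
            ultimately have "\<tau> \<in> Z" using \<tau> by (auto simp: Z_def)
            hence "T \<le> \<tau>" unfolding T_def using cInf_lower[OF _ bdd] by blast
            thus False using \<tau> by simp
          qed
        qed
        have nb: "norm (\<theta> T - \<theta> 0) \<le> c" by (rule CoreB[OF T0 hyp])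
        have "c \<le> Lb * \<delta>0 / lm" unfolding c_def using d0 \<delta> Lb lm
          by (intro divide_right_mono mult_left_mono) auto
        have "dist x0 (\<theta> T) \<le> dist x0 (\<theta> 0) + dist (\<theta> 0) (\<theta> T)" by (rule dist_triangle)
        also have "dist (\<theta> 0) (\<theta> T) = norm (\<theta> T - \<theta> 0)" by (simp add: dist_norm norm_minus_commute)
        finally have "dist x0 (\<theta> T) < s/4 + \<delta>0 + Lb * \<delta>0 / lm" using th0 nb \<open>c \<le> Lb * \<delta>0 / lm\<close> by linarith
        hence "dist x0 (\<theta> T) < s" using \<delta>0 s by linarith
        thus False using TZ by (auto simp: Z_def)
      qed
      have st: "\<forall>\<tau>\<in>{0<..<t}. \<theta> \<tau> \<in> ball x0 s" using stay by auto
      have "D t \<le> exp (-lm*t) * d0" by (rule Dbound[OF t st])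
      thus ?thesis by (simp add: D_def d0_def)
    qed
    have all: "\<forall>R\<in>{0<..s/2}. \<forall>\<delta>\<in>{0<..\<delta>0}. \<forall>\<theta> :: real \<Rightarrow> 'a.
             \<theta> 0 \<in> Vnbhd S (R/2) \<delta> x0 \<and> gradient_flow f \<theta> \<longrightarrow>
             (\<forall>t\<ge>0. infdist (\<theta> t) S \<le> exp (-lm * t) * infdist (\<theta> 0) S)"
      using main by blast
    show "\<exists>R0>0. \<exists>\<delta>0>0. \<exists>lam>0. \<forall>R\<in>{0<..R0}. \<forall>\<delta>\<in>{0<..\<delta>0}. \<forall>\<theta> :: real \<Rightarrow> 'a.
             \<theta> 0 \<in> Vnbhd S (R/2) \<delta> x0 \<and> gradient_flow f \<theta> \<longrightarrow>
             (\<forall>t\<ge>0. infdist (\<theta> t) S \<le> exp (-lam * t) * infdist (\<theta> 0) S)"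
      using all s(1) \<delta>0(1) lm by (intro exI[of _ "s/2"]; simp only: half_gt_zero_iff simp_thms; intro exI[of _ \<delta>0] exI[of _ lm]; blast)
  qed
qed

theorem proposition3p1:
  fixes f :: "'a::euclidean_space \<Rightarrow> real" and U :: "'a set" and k :: nat
  assumes "1 \<le> k" and "k \<le> DIM('a) - 1"
    and "open U" and "C3_on U f"
    and "minset f \<inter> U \<noteq> {}"
    and "C1_submanifold k (minset f \<inter> U)"
    and "\<forall>\<theta>\<in>minset f \<inter> U. dim (range (hessian f \<theta>)) = DIM('a) - k"
  shows "\<forall>x0\<in>minset f \<inter> U. \<exists>R0>0. \<exists>\<delta>0>0. \<exists>lam>0.
           \<forall>R\<in>{0<..R0}. \<forall>\<delta>\<in>{0<..\<delta>0}. \<forall>\<theta> :: real \<Rightarrow> 'a.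
             \<theta> 0 \<in> Vnbhd (minset f \<inter> U) (R/2) \<delta> x0 \<and> gradient_flow f \<theta> \<longrightarrow>
             (\<forall>t\<ge>0. infdist (\<theta> t) (minset f \<inter> U) \<le> exp (-lam * t) * infdist (\<theta> 0) (minset f \<inter> U))"
  using assms by (rule prop_main)

end
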